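(* Let $\lambda>0$ and $R_c>0$. Let $\Phi$ be a homogeneous Poisson point process on $\mathbb{R}^2$ of intensity $\lambda$, let $\mathcal{D}=\{y\in\mathbb{R}^2:\|y\|\le R_c\}$ and $\Phi_o=\Phi\setminus\mathcal{D}$. Fix $r_0\in[0,R_c]$, put $x_0=(r_0,0)$ and let $r_1=\min_{y\in\Phi_o}\|y-x_0\|$. Then the (conditional, given $r_0$) probability density function of $r_1$ is $$f_{r_1|r_0}(r)=\begin{cases}0, & r\le R_c-r_0,\\ \lambda\zeta_1(r)e^{-\lambda\zeta_2(r)}, & R_c-r_0<r<R_c+r_0,\\ 2\pi\lambda r\, e^{-\lambda(\pi r^2-\pi R_c^2)}, & \text{otherwise},\end{cases}$$ and its cumulative distribution function is $$F_{r_1|r_0}(r)=\begin{cases}0, & r\le R_c-r_0,\\ 1-e^{-\lambda\zeta_2(r)}, & R_c-r_0<r<R_c+r_0,\\ 1-e^{-\lambda(\pi r^2-\pi R_c^2)}, & \text{otherwise},\end{cases}$$ where $$\zeta_1(r)=2\pi r+\frac{r}{r_0}\sqrt{-\frac{(r-r_0-R_c)(r+r_0-R_c)(r-r_0+R_c)(r+r_0+R_c)}{r_0^2}}-\frac{r}{r_0}\sqrt{-\frac{(-r+r_0-R_c)(r+r_0-R_c)(-r+r_0+R_c)(r+r_0+R_c)}{r_0^2}}-2r\sec^{-1}\frac{2rr_0}{r^2+r_0^2-R_c^2},$$ $$\zeta_2(r)=\pi r^2-\theta_1(r)R_c^2+R_c^2\sin\theta_1(r)\cos\theta_1(r)-\theta_2(r)r^2+r^2\sin\theta_2(r)\cos\theta_2(r),$$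 with $\theta_1(r)=\arccos\frac{R_c^2+r_0^2-r^2}{2R_cr_0}$ and $\theta_2(r)=\arccos\frac{r_0^2+r^2-R_c^2}{2r_0r}$.
   Context: $\Phi_o$ models the working ground base stations outside the circular malfunction area $\mathcal{D}$ centered at the origin; $x_0$ is a user located at horizontal distance $r_0$ from the center, and $r_1$ is the distance from the user to its nearest working ground base station. When $r_0=0$ the middle case is empty. *)

theory Defs
  imports "HOL-Probability.Probability"
begin

definition poisson_point_process ::
  "'s measure \<Rightarrow> ('s \<Rightarrow> (real \<times> real) set) \<Rightarrow> real \<Rightarrow> bool" where
  "poisson_point_process M Phi lam \<longleftrightarrow>
     prob_space M \<and>
     (\<forall>\<omega>\<in>space M. \<forall>A. bounded A \<longrightarrow> finite (Phi \<omega> \<inter> A)) \<and>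
     (\<forall>A. A \<in> sets lborel \<and> bounded A \<longrightarrow>
        (\<forall>k::nat. measure M {\<omega>\<in>space M. card (Phi \<omega> \<inter> A) = k}
             = (lam * measure lborel A) ^ k / fact k * exp (- lam * measure lborel A))) \<and>
     (\<forall>(I::nat set) (A::nat \<Rightarrow> (real \<times> real) set).
        finite I \<and> (\<forall>i\<in>I. A i \<in> sets lborel \<and> bounded (A i)) \<and> disjoint_family_on A I \<longrightarrow>
        prob_space.indep_vars M (\<lambda>_. count_space UNIV) (\<lambda>i \<omega>. card (Phi \<omega> \<inter> A i)) I)"

definition arcsec :: "real \<Rightarrow> real" where
  "arcsec x = arccos (1 / x)"

definition theta1 :: "real \<Rightarrow> real \<Rightarrow> real \<Rightarrow> real" where
  "theta1 Rc r0 r = arccos ((Rc\<^sup>2 + r0\<^sup>2 - r\<^sup>2) / (2 * Rc * r0))"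

definition theta2 :: "real \<Rightarrow> real \<Rightarrow> real \<Rightarrow> real" where
  "theta2 Rc r0 r = arccos ((r0\<^sup>2 + r\<^sup>2 - Rc\<^sup>2) / (2 * r0 * r))"

definition zeta1 :: "real \<Rightarrow> real \<Rightarrow> real \<Rightarrow> real" where
  "zeta1 Rc r0 r =
     2 * pi * r
     + r / r0 * sqrt (- ((r - r0 - Rc) * (r + r0 - Rc) * (r - r0 + Rc) * (r + r0 + Rc)) / r0\<^sup>2)
     - r / r0 * sqrt (- ((- r + r0 - Rc) * (r + r0 - Rc) * (- r + r0 + Rc) * (r + r0 + Rc)) / r0\<^sup>2)
     - 2 * r * arcsec (2 * r * r0 / (r\<^sup>2 + r0\<^sup>2 - Rc\<^sup>2))"

definition zeta2 :: "real \<Rightarrow> real \<Rightarrow> real \<Rightarrow> real" where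
  "zeta2 Rc r0 r =
     pi * r\<^sup>2 - theta1 Rc r0 r * Rc\<^sup>2 + Rc\<^sup>2 * sin (theta1 Rc r0 r) * cos (theta1 Rc r0 r)
     - theta2 Rc r0 r * r\<^sup>2 + r\<^sup>2 * sin (theta2 Rc r0 r) * cos (theta2 Rc r0 r)"

definition pdf_r1 :: "real \<Rightarrow> real \<Rightarrow> real \<Rightarrow> real \<Rightarrow> real" where
  "pdf_r1 lam Rc r0 r =
     (if r \<le> Rc - r0 then 0
      else if r < Rc + r0 then lam * zeta1 Rc r0 r * exp (- lam * zeta2 Rc r0 r)
      else 2 * pi * lam * r * exp (- lam * (pi * r\<^sup>2 - pi * Rc\<^sup>2)))"

definition cdf_r1 :: "real \<Rightarrow> real \<Rightarrow> real \<Rightarrow> real \<Rightarrow> real" where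
  "cdf_r1 lam Rc r0 r =
     (if r \<le> Rc - r0 then 0
      else if r < Rc + r0 then 1 - exp (- lam * zeta2 Rc r0 r)
      else 1 - exp (- lam * (pi * r\<^sup>2 - pi * Rc\<^sup>2)))"

end

theory Submission
  imports Defs "HOL-Real_Asymp.Real_Asymp"
begin

definition phi :: "real \<Rightarrow> real" where
  "phi u = arccos u - u * sqrt (1 - u\<^sup>2)"

lemma phi_deriv:
  assumes "-1 < u" "u < 1"
  shows "(phi has_real_derivative (-2 * sqrt (1 - u\<^sup>2))) (at u)"
proof -
  have s: "sqrt (1 - u\<^sup>2) > 0" using assms by (simp add: abs_square_less_1 abs_less_iff)
  have D: "(phi has_real_derivative (inverse (- sqrt (1 - u\<^sup>2)) - (1 * sqrt (1 - u\<^sup>2) + u * (inverse (sqrt (1 - u\<^sup>2)) / 2 * (- (2 * u)))))) (at u)"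
    unfolding phi_def[abs_def]
    apply (intro derivative_intros DERIV_arccos assms)
    using s by (auto intro!: derivative_eq_intros)
  have E: "inverse (- sqrt (1 - u\<^sup>2)) - (1 * sqrt (1 - u\<^sup>2) + u * (inverse (sqrt (1 - u\<^sup>2)) / 2 * (- (2 * u)))) = -2 * sqrt (1 - u\<^sup>2)"
  proof -
    have q: "sqrt (1 - u\<^sup>2) * sqrt (1 - u\<^sup>2) = 1 - u\<^sup>2" using s by (metis less_eq_real_def real_sqrt_pow2 power2_eq_square real_sqrt_ge_0_iff)
    show ?thesis using s q by (simp add: field_simps) (simp add: algebra_simps power2_eq_square)
  qed
  show ?thesis by (rule DERIV_cong[OF D E])
qed

definition Hs :: "real \<Rightarrow> real \<Rightarrow> real" where
  "Hs \<rho> t = t * sqrt (\<rho>\<^sup>2 - t\<^sup>2) + \<rho>\<^sup>2 * arcsin (t / \<rho>)"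

lemma Hs_deriv:
  assumes "\<rho> > 0" "\<bar>t\<bar> < \<rho>"
  shows "(Hs \<rho> has_real_derivative 2 * sqrt (\<rho>\<^sup>2 - t\<^sup>2)) (at t)"
proof -
  have p: "\<rho>\<^sup>2 - t\<^sup>2 > 0" using assms
  proof -
    have "\<bar>t\<bar>\<^sup>2 < \<rho>\<^sup>2" using assms by (intro power_strict_mono) auto
    then show ?thesis by simp
  qed
  have s: "sqrt (\<rho>\<^sup>2 - t\<^sup>2) > 0" using p by simp
  have b: "-1 < t / \<rho>" "t / \<rho> < 1" using assms by (auto simp: field_simps abs_less_iff)
  have D: "(Hs \<rho> has_real_derivative
      (1 * sqrt (\<rho>\<^sup>2 - t\<^sup>2) + t * (inverse (sqrt (\<rho>\<^sup>2 - t\<^sup>2)) / 2 * (0 - 2 * t)) + \<rho>\<^sup>2 * (inverse (sqrt (1 - (t/\<rho>)\<^sup>2)) * (1 / \<rho>)))) (at t)"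
    unfolding Hs_def[abs_def]
    using s b by (auto intro!: derivative_eq_intros)
  have e1: "sqrt (1 - (t/\<rho>)\<^sup>2) = sqrt (\<rho>\<^sup>2 - t\<^sup>2) / \<rho>"
  proof -
    have "1 - (t/\<rho>)\<^sup>2 = (\<rho>\<^sup>2 - t\<^sup>2) / \<rho>\<^sup>2" using assms by (simp add: field_simps power2_eq_square)
    then show ?thesis using assms by (simp add: real_sqrt_divide)
  qed
  have q: "sqrt (\<rho>\<^sup>2 - t\<^sup>2) * sqrt (\<rho>\<^sup>2 - t\<^sup>2) = \<rho>\<^sup>2 - t\<^sup>2" using p by simp
  have E: "1 * sqrt (\<rho>\<^sup>2 - t\<^sup>2) + t * (inverse (sqrt (\<rho>\<^sup>2 - t\<^sup>2)) / 2 * (0 - 2 * t)) + \<rho>\<^sup>2 * (inverse (sqrt (1 - (t/\<rho>)\<^sup>2)) * (1 / \<rho>))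
      = 2 * sqrt (\<rho>\<^sup>2 - t\<^sup>2)"
    unfolding e1 using s q assms by (simp add: field_simps) (simp add: algebra_simps power2_eq_square)
  show ?thesis by (rule DERIV_cong[OF D E])
qed

lemma seg_integral:
  assumes "\<rho> > 0" "c - \<rho> \<le> lo" "lo \<le> hi" "hi \<le> c + \<rho>"
  shows "((\<lambda>x. 2 * sqrt (\<rho>\<^sup>2 - (x - c)\<^sup>2)) has_integral (Hs \<rho> (hi - c) - Hs \<rho> (lo - c))) {lo..hi}"
proof -
  have "((\<lambda>x. 2 * sqrt (\<rho>\<^sup>2 - (x - c)\<^sup>2)) has_integral ((\<lambda>x. Hs \<rho> (x - c)) hi - (\<lambda>x. Hs \<rho> (x - c)) lo)) {lo..hi}"
  proof (rule fundamental_theorem_of_calculus_interior[OF assms(3)])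
    show "continuous_on {lo..hi} (\<lambda>x. Hs \<rho> (x - c))"
      unfolding Hs_def using assms
      by (intro continuous_intros) (auto simp: field_simps)
    fix x assume x: "x \<in> {lo<..<hi}"
    have xb: "\<bar>x - c\<bar> < \<rho>" using x assms by auto
    have d1: "((\<lambda>x. x - c) has_real_derivative 1) (at x)" by (auto intro!: derivative_eq_intros)
    from DERIV_chain2[where f="Hs \<rho>" and g="\<lambda>x. x - c" and x=x, OF Hs_deriv[OF assms(1) xb] d1]
    have "((\<lambda>x. Hs \<rho> (x - c)) has_real_derivative 2 * sqrt (\<rho>\<^sup>2 - (x - c)\<^sup>2)) (at x)"
      by (auto intro!: derivative_eq_intros)
    then show "((\<lambda>x. Hs \<rho> (x - c)) has_vector_derivative 2 * sqrt (\<rho>\<^sup>2 - (x - c)\<^sup>2)) (at x)"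
      by (simp add: has_real_derivative_iff_has_vector_derivative)
  qed
  then show ?thesis by simp
qed

definition uA :: "real \<Rightarrow> real \<Rightarrow> real \<Rightarrow> real" where
  "uA Rc r0 r = (Rc\<^sup>2 + r0\<^sup>2 - r\<^sup>2) / (2 * Rc * r0)"
definition uB :: "real \<Rightarrow> real \<Rightarrow> real \<Rightarrow> real" where
  "uB Rc r0 r = (r0\<^sup>2 + r\<^sup>2 - Rc\<^sup>2) / (2 * r0 * r)"

lemma u_bounds_open:
  assumes "0 < r0" "r0 \<le> Rc" "Rc - r0 < r" "r < Rc + r0"
  shows "-1 < uA Rc r0 r" "uA Rc r0 r < 1" "-1 < uB Rc r0 r" "uB Rc r0 r < 1" "0 < r"
proof -
  show r: "0 < r" using assms by linarith
  have d1: "2 * Rc * r0 > 0" "2 * r0 * r > 0" using assms r by auto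
  have "(Rc - r0)\<^sup>2 < r\<^sup>2" using assms by (intro power_strict_mono) auto
  then have "Rc\<^sup>2 + r0\<^sup>2 - r\<^sup>2 < 2 * Rc * r0" by (simp add: power2_diff)
  then show "uA Rc r0 r < 1" unfolding uA_def using d1 by simp
  have "r\<^sup>2 < (Rc + r0)\<^sup>2" using assms r by (intro power_strict_mono) auto
  then have "- (2 * Rc * r0) < Rc\<^sup>2 + r0\<^sup>2 - r\<^sup>2" by (simp add: power2_sum)
  then show "-1 < uA Rc r0 r" unfolding uA_def using d1 by (simp add: field_simps)
  have "\<bar>r - r0\<bar>\<^sup>2 < Rc\<^sup>2" using assms r by (intro power_strict_mono) auto
  then have "r0\<^sup>2 + r\<^sup>2 - Rc\<^sup>2 < 2 * r0 * r" by (simp add: power2_diff mult_ac)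
  then show "uB Rc r0 r < 1" unfolding uB_def using d1 by simp
  have "Rc\<^sup>2 < (r + r0)\<^sup>2" using assms r by (intro power_strict_mono) auto
  then have "- (2 * r0 * r) < r0\<^sup>2 + r\<^sup>2 - Rc\<^sup>2" by (simp add: power2_sum mult_ac)
  then show "-1 < uB Rc r0 r" unfolding uB_def using d1 by (simp add: field_simps)
qed

lemma u_bounds_closed:
  assumes "0 < r0" "r0 \<le> Rc" "Rc - r0 \<le> r" "r \<le> Rc + r0" "0 < r"
  shows "-1 \<le> uA Rc r0 r" "uA Rc r0 r \<le> 1" "-1 \<le> uB Rc r0 r" "uB Rc r0 r \<le> 1"
proof -
  note r = assms(5)
  have d1: "2 * Rc * r0 > 0" "2 * r0 * r > 0" using assms r by auto
  have "(Rc - r0)\<^sup>2 \<le> r\<^sup>2" using assms by (intro power_mono) auto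
  then have "Rc\<^sup>2 + r0\<^sup>2 - r\<^sup>2 \<le> 2 * Rc * r0" by (simp add: power2_diff)
  then show "uA Rc r0 r \<le> 1" unfolding uA_def using d1 by simp
  have "r\<^sup>2 \<le> (Rc + r0)\<^sup>2" using assms r by (intro power_mono) auto
  then have "- (2 * Rc * r0) \<le> Rc\<^sup>2 + r0\<^sup>2 - r\<^sup>2" by (simp add: power2_sum)
  then show "-1 \<le> uA Rc r0 r" unfolding uA_def using d1 by (simp add: field_simps)
  have "\<bar>r - r0\<bar>\<^sup>2 \<le> Rc\<^sup>2" using assms r by (intro power_mono) auto
  then have "r0\<^sup>2 + r\<^sup>2 - Rc\<^sup>2 \<le> 2 * r0 * r" by (simp add: power2_diff mult_ac)
  then show "uB Rc r0 r \<le> 1" unfolding uB_def using d1 by simp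
  have "Rc\<^sup>2 \<le> (r + r0)\<^sup>2" using assms r by (intro power_mono) auto
  then have "- (2 * r0 * r) \<le> r0\<^sup>2 + r\<^sup>2 - Rc\<^sup>2" by (simp add: power2_sum mult_ac)
  then show "-1 \<le> uB Rc r0 r" unfolding uB_def using d1 by (simp add: field_simps)
qed

lemma mem_cball_pair:
  fixes a b x y r :: real
  assumes "r \<ge> 0"
  shows "(x, y) \<in> cball (a, b) r \<longleftrightarrow> (x - a)\<^sup>2 + (y - b)\<^sup>2 \<le> r\<^sup>2"
proof -
  have "(x, y) \<in> cball (a, b) r \<longleftrightarrow> sqrt ((x - a)\<^sup>2 + (y - b)\<^sup>2) \<le> r"
    by (simp add: dist_Pair_Pair dist_real_def power2_commute)
  also have "\<dots> \<longleftrightarrow> (x - a)\<^sup>2 + (y - b)\<^sup>2 \<le> r\<^sup>2"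
    using assms sqrt_le_D real_le_lsqrt by blast
  finally show ?thesis .
qed

lemma Hs_scaled:
  assumes "\<rho> > 0" "\<bar>v\<bar> \<le> 1"
  shows "Hs \<rho> (\<rho> * v) = \<rho>\<^sup>2 * (v * sqrt (1 - v\<^sup>2) + arcsin v)"
proof -
  have "\<rho>\<^sup>2 - (\<rho> * v)\<^sup>2 = \<rho>\<^sup>2 * (1 - v\<^sup>2)" by (simp add: algebra_simps power_mult_distrib)
  then have "sqrt (\<rho>\<^sup>2 - (\<rho> * v)\<^sup>2) = \<rho> * sqrt (1 - v\<^sup>2)" using assms by (simp add: real_sqrt_mult)
  then show ?thesis unfolding Hs_def using assms by (simp add: algebra_simps power2_eq_square)
qed

lemma slice_measure:
  fixes x r Rc r0 :: real
  assumes "r \<ge> 0" "Rc \<ge> 0"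
  shows "emeasure lborel (Pair x -` (cball (r0, 0::real) r \<inter> cball 0 Rc))
       = ennreal (2 * sqrt (max 0 (min (r\<^sup>2 - (x - r0)\<^sup>2) (Rc\<^sup>2 - x\<^sup>2))))"
proof -
  define g where "g = min (r\<^sup>2 - (x - r0)\<^sup>2) (Rc\<^sup>2 - x\<^sup>2)"
  have S: "Pair x -` (cball (r0, 0) r \<inter> cball 0 Rc) = {y. y\<^sup>2 \<le> g}"
  proof -
    have m1: "\<And>y. (x,y) \<in> cball (r0,0) r \<longleftrightarrow> (x-r0)\<^sup>2 + y\<^sup>2 \<le> r\<^sup>2"
      using mem_cball_pair[OF assms(1)] by simp
    have m2: "\<And>y. (x,y) \<in> cball 0 Rc \<longleftrightarrow> x\<^sup>2 + y\<^sup>2 \<le> Rc\<^sup>2"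
      using mem_cball_pair[OF assms(2), of x _ 0 0] by (simp add: zero_prod_def)
    show ?thesis by (auto simp: g_def m1 m2 simp del: mem_cball mem_cball_0)
  qed
  show ?thesis
  proof (cases "g \<ge> 0")
    case True
    have "{y. y\<^sup>2 \<le> g} = {- sqrt g .. sqrt g}"
    proof -
      have "{y. y\<^sup>2 \<le> g} = {y. \<bar>y\<bar> \<le> sqrt g}"
        by (auto simp del: power2_abs) (metis power2_abs real_le_rsqrt, metis sqrt_ge_absD)
      also have "\<dots> = {- sqrt g .. sqrt g}" by (auto simp: abs_le_iff)
      finally show ?thesis .
    qed
    then have "emeasure lborel {y. y\<^sup>2 \<le> g} = ennreal (2 * sqrt g)" using True by simp
    then show ?thesis using True by (simp only: S g_def[symmetric] max_absorb2)
  next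
    case False
    then have "{y. y\<^sup>2 \<le> g} = {}" by (auto intro: order.trans[OF zero_le_power2])
    then have "emeasure lborel {y. y\<^sup>2 \<le> g} = ennreal (2 * sqrt (max 0 g))" using False by simp
    then show ?thesis by (simp only: S g_def[symmetric])
  qed
qed

lemma lens_measure:
  fixes r r0 Rc :: real
  assumes "0 < r0" "r0 \<le> Rc" "Rc - r0 < r" "r < Rc + r0"
  shows "measure lborel (cball (r0, 0::real) r \<inter> cball 0 Rc)
       = r\<^sup>2 * phi (uB Rc r0 r) + Rc\<^sup>2 * phi (uA Rc r0 r)"
proof -
  note ub = u_bounds_open[OF assms]
  have r: "r > 0" by (rule ub(5))
  have Rc: "Rc > 0" using assms by linarith
  define L where "L = cball (r0, 0::real) r \<inter> cball 0 Rc"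
  define c where "c x = 2 * sqrt (max 0 (min (r\<^sup>2 - (x - r0)\<^sup>2) (Rc\<^sup>2 - x\<^sup>2)))" for x
  define a0 where "a0 = (Rc\<^sup>2 - r\<^sup>2 + r0\<^sup>2) / (2 * r0)"
  have a0r: "a0 - r0 = r * (- uB Rc r0 r)" unfolding a0_def uB_def using r assms(1)
    by (simp add: field_simps power2_eq_square)
  have a0R: "a0 = Rc * uA Rc r0 r" unfolding a0_def uA_def using Rc assms(1)
    by (simp add: field_simps power2_eq_square)
  have a0m: "2 * r0 * a0 = Rc\<^sup>2 - r\<^sup>2 + r0\<^sup>2" unfolding a0_def using assms(1) by simp
  have lo1: "r0 - r \<le> a0"
  proof -
    have "r * uB Rc r0 r \<le> r * 1" using ub r by (intro mult_left_mono) auto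
    then show ?thesis using a0r by simp
  qed
  have hi1: "a0 \<le> r0 + r"
  proof -
    have "r * (- uB Rc r0 r) \<le> r * 1" using ub r by (intro mult_left_mono) auto
    then show ?thesis using a0r by simp
  qed
  have lo2: "- Rc \<le> a0"
  proof -
    have "Rc * uA Rc r0 r \<ge> Rc * (-1)" using ub Rc by (intro mult_left_mono) auto
    then show ?thesis using a0R by simp
  qed
  have hi2: "a0 \<le> Rc"
  proof -
    have "Rc * uA Rc r0 r \<le> Rc * 1" using ub Rc by (intro mult_left_mono) auto
    then show ?thesis using a0R by simp
  qed
  have I1: "(c has_integral (Hs r (a0 - r0) - Hs r ((r0 - r) - r0))) {r0 - r .. a0}"
  proof (rule has_integral_eq[OF _ seg_integral[OF r _ lo1 hi1]])
    fix x assume x: "x \<in> {r0 - r .. a0}"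
    have "\<bar>x - r0\<bar> \<le> r" using x hi1 by auto
    then have sq: "(x - r0)\<^sup>2 \<le> r\<^sup>2" using r by (metis abs_le_square_iff abs_of_pos)
    have "2 * r0 * x \<le> 2 * r0 * a0" using x assms(1) by auto
    then have "r\<^sup>2 - (x - r0)\<^sup>2 \<le> Rc\<^sup>2 - x\<^sup>2" using a0m by (simp add: power2_diff algebra_simps)
    then show "2 * sqrt (r\<^sup>2 - (x - r0)\<^sup>2) = c x" unfolding c_def using sq by simp
  qed simp
  have I2: "(c has_integral (Hs Rc (Rc - 0) - Hs Rc (a0 - 0))) {a0 .. Rc}"
  proof (rule has_integral_eq[OF _ seg_integral[OF Rc _ hi2]])
    fix x assume x: "x \<in> {a0 .. Rc}"
    have "\<bar>x\<bar> \<le> Rc" using x lo2 by auto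
    then have sq: "x\<^sup>2 \<le> Rc\<^sup>2" using Rc by (metis abs_le_square_iff abs_of_pos)
    have "2 * r0 * x \<ge> 2 * r0 * a0" using x assms(1) by auto
    then have "r\<^sup>2 - (x - r0)\<^sup>2 \<ge> Rc\<^sup>2 - x\<^sup>2" using a0m by (simp add: power2_diff algebra_simps)
    then show "2 * sqrt (Rc\<^sup>2 - (x - 0)\<^sup>2) = c x" unfolding c_def using sq by simp
  qed (use lo2 in auto)
  define V where "V = (Hs r (a0 - r0) - Hs r ((r0 - r) - r0)) + (Hs Rc (Rc - 0) - Hs Rc (a0 - 0))"
  have I: "(c has_integral V) {r0 - r .. Rc}"
    unfolding V_def by (rule has_integral_combine[OF lo1 hi2 I1 I2])
  have cnn: "\<And>x. 0 \<le> c x" unfolding c_def by simp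
  have V0: "V \<ge> 0" using has_integral_nonneg[OF I] cnn by auto
  have Lsets: "L \<in> sets (lborel \<Otimes>\<^sub>M lborel)" unfolding L_def lborel_prod by auto
  have "emeasure lborel L = emeasure (lborel \<Otimes>\<^sub>M lborel) L" by (simp add: lborel_prod)
  also have "\<dots> = (\<integral>\<^sup>+x. emeasure lborel (Pair x -` L) \<partial>lborel)"
    by (rule lborel.emeasure_pair_measure_alt[OF Lsets])
  also have "\<dots> = (\<integral>\<^sup>+x. ennreal (c x) * indicator {r0 - r .. Rc} x \<partial>lborel)"
  proof (rule nn_integral_cong)
    fix x :: real
    have e: "emeasure lborel (Pair x -` L) = ennreal (c x)"
      unfolding L_def c_def using slice_measure[of r Rc x r0] r Rc by simp
    show "emeasure lborel (Pair x -` L) = ennreal (c x) * indicator {r0 - r .. Rc} x"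
    proof (cases "x \<in> {r0 - r .. Rc}")
      case True then show ?thesis using e by simp
    next
      case False
      then consider "x < r0 - r" | "x > Rc" by auto
      then have "c x = 0"
      proof cases
        case 1
        then have "r < \<bar>x - r0\<bar>" by auto
        then have "r\<^sup>2 < (x - r0)\<^sup>2" using r by (metis abs_le_square_iff abs_of_pos not_le)
        then show ?thesis unfolding c_def by simp
      next
        case 2
        then have "Rc < \<bar>x\<bar>" by auto
        then have "Rc\<^sup>2 < x\<^sup>2" using Rc by (metis abs_le_square_iff abs_of_pos not_le)
        then show ?thesis unfolding c_def by simp
      qed
      then show ?thesis using e False by simp
    qed
  qed
  also have "\<dots> = ennreal V"
    by (rule nn_integral_has_integral_lebesgue'[OF _ I]) (rule cnn)
  finally have "measure lborel L = V" using V0 by (simp add: measure_def)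
  also have "V = r\<^sup>2 * phi (uB Rc r0 r) + Rc\<^sup>2 * phi (uA Rc r0 r)"
  proof -
    have b1: "\<bar>- uB Rc r0 r\<bar> \<le> 1" "\<bar>uA Rc r0 r\<bar> \<le> 1" using ub by auto
    have "V = Hs r (r * (- uB Rc r0 r)) - Hs r (r * (-1)) + (Hs Rc (Rc * 1) - Hs Rc (Rc * uA Rc r0 r))"
      unfolding V_def a0r[symmetric] a0R[symmetric] by simp
    also have "\<dots> = r\<^sup>2 * ((- uB Rc r0 r) * sqrt (1 - (uB Rc r0 r)\<^sup>2) + arcsin (- uB Rc r0 r))
        - r\<^sup>2 * (- pi / 2) + (Rc\<^sup>2 * (pi / 2) - Rc\<^sup>2 * (uA Rc r0 r * sqrt (1 - (uA Rc r0 r)\<^sup>2) + arcsin (uA Rc r0 r)))"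
      using Hs_scaled[OF r b1(1)] Hs_scaled[OF r, of "-1"] Hs_scaled[OF Rc, of 1] Hs_scaled[OF Rc b1(2)]
      by simp
    also have "\<dots> = r\<^sup>2 * phi (uB Rc r0 r) + Rc\<^sup>2 * phi (uA Rc r0 r)"
      unfolding phi_def using ub
      by (simp add: arcsin_minus arcsin_arccos_eq arccos_minus algebra_simps)
    finally show ?thesis .
  qed
  finally show ?thesis unfolding L_def .
qed

definition W :: "real \<Rightarrow> real \<Rightarrow> real \<Rightarrow> real" where
  "W Rc r0 r = pi * r\<^sup>2 - Rc\<^sup>2 * phi (uA Rc r0 r) - r\<^sup>2 * phi (uB Rc r0 r)"

definition area :: "real \<Rightarrow> real \<Rightarrow> real \<Rightarrow> real" where
  "area Rc r0 r = (if r \<le> Rc - r0 then 0 else if r < Rc + r0 then W Rc r0 r else pi * r\<^sup>2 - pi * Rc\<^sup>2)"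

lemma zeta2_eq_W:
  assumes "\<bar>uA Rc r0 r\<bar> \<le> 1" "\<bar>uB Rc r0 r\<bar> \<le> 1"
  shows "zeta2 Rc r0 r = W Rc r0 r"
proof -
  have t1: "theta1 Rc r0 r = arccos (uA Rc r0 r)" unfolding theta1_def uA_def ..
  have t2: "theta2 Rc r0 r = arccos (uB Rc r0 r)" unfolding theta2_def uB_def ..
  have s1: "sin (arccos (uA Rc r0 r)) = sqrt (1 - (uA Rc r0 r)\<^sup>2)" using assms(1) by (rule sin_arccos_abs)
  have s2: "sin (arccos (uB Rc r0 r)) = sqrt (1 - (uB Rc r0 r)\<^sup>2)" using assms(2) by (rule sin_arccos_abs)
  have c1: "cos (arccos (uA Rc r0 r)) = uA Rc r0 r" using assms(1) by (rule cos_arccos_abs)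
  have c2: "cos (arccos (uB Rc r0 r)) = uB Rc r0 r" using assms(2) by (rule cos_arccos_abs)
  show ?thesis unfolding zeta2_def W_def phi_def t1 t2 s1 s2 c1 c2
    by (simp add: algebra_simps)
qed

lemma zeta1_eq: "zeta1 Rc r0 r = 2 * pi * r - 2 * r * arccos (uB Rc r0 r)"
proof -
  have p: "(- r + r0 - Rc) * (r + r0 - Rc) * (- r + r0 + Rc) * (r + r0 + Rc)
         = (r - r0 - Rc) * (r + r0 - Rc) * (r - r0 + Rc) * (r + r0 + Rc)"
  proof -
    have "(- r + r0 - Rc) * (- r + r0 + Rc) = (r - r0 - Rc) * (r - r0 + Rc)" by (simp add: algebra_simps)
    then show ?thesis by (metis mult.commute mult.assoc)
  qed
  have q: "1 / (2 * r * r0 / (r\<^sup>2 + r0\<^sup>2 - Rc\<^sup>2)) = uB Rc r0 r"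
    unfolding uB_def by (simp add: ac_simps)
  show ?thesis unfolding zeta1_def arcsec_def p q by simp
qed

lemma cball_pi: "r \<ge> 0 \<Longrightarrow> measure lborel (cball (c::real\<times>real) r) = pi * r\<^sup>2"
  by (simp add: content_cball unit_ball_vol_2 power2_eq_square)

lemma area_measure:
  fixes r r0 Rc :: real
  assumes "0 \<le> r0" "r0 \<le> Rc" "0 < Rc"
  shows "measure lborel (cball (r0, 0::real) r - cball 0 Rc) = area Rc r0 r"
proof -
  have n0: "norm (r0, 0::real) = r0" using assms by simp
  consider "r \<le> Rc - r0" | "Rc - r0 < r" "r < Rc + r0" | "Rc + r0 \<le> r" by linarith
  then show ?thesis
  proof cases
    case 1
    have "cball (r0, 0::real) r \<subseteq> cball 0 Rc"
    proof
      fix y :: "real \<times> real" assume "y \<in> cball (r0, 0) r"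
      then have "dist (r0, 0) y \<le> r" by simp
      moreover have "norm y \<le> norm (r0, 0::real) + dist (r0, 0) y"
        using norm_triangle_sub[of y "(r0, 0::real)"] by (simp add: dist_norm norm_minus_commute)
      ultimately show "y \<in> cball 0 Rc" using n0 1 by simp
    qed
    then have e: "cball (r0, 0::real) r - cball 0 Rc = {}" by blast
    show ?thesis using 1 unfolding area_def e by simp
  next
    case 2
    then have r0: "0 < r0" by linarith
    have r: "r > 0" using 2 assms by linarith
    have "measure lborel (cball (r0, 0::real) r - cball 0 Rc)
        = measure lborel (cball (r0, 0::real) r - (cball (r0, 0::real) r \<inter> cball 0 Rc))"
      by (rule arg_cong[where f="measure lborel"]) blast
    also have "\<dots> = measure lborel (cball (r0, 0::real) r) - measure lborel (cball (r0, 0::real) r \<inter> cball 0 Rc)"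
      by (rule measure_Diff) (use emeasure_lborel_cball_finite[of "(r0, 0::real)" r] in auto)
    also have "\<dots> = W Rc r0 r"
      unfolding lens_measure[OF r0 assms(2) 2] W_def using r by (simp add: cball_pi)
    finally show ?thesis using 2 unfolding area_def by simp
  next
    case 3
    have sub: "cball 0 Rc \<subseteq> cball (r0, 0::real) r"
    proof
      fix y :: "real \<times> real" assume "y \<in> cball 0 Rc"
      then have "norm y \<le> Rc" by simp
      moreover have "dist (r0, 0) y \<le> norm (r0, 0::real) + norm y"
        using norm_triangle_ineq4[of "(r0, 0::real)" y] by (simp only: dist_norm)
      ultimately show "y \<in> cball (r0, 0) r" using n0 3 by simp
    qed
    have "measure lborel (cball (r0, 0::real) r - cball 0 Rc)
        = measure lborel (cball (r0, 0::real) r) - measure lborel (cball (0::real\<times>real) Rc)"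
      by (rule measure_Diff) (use sub emeasure_lborel_cball_finite[of "(r0, 0::real)" r] in auto)
    also have "\<dots> = pi * r\<^sup>2 - pi * Rc\<^sup>2" using 3 assms by (simp add: cball_pi)
    finally show ?thesis using 3 assms unfolding area_def by auto
  qed
qed

lemma cdf_area:
  assumes "0 \<le> r0" "r0 \<le> Rc" "0 < Rc"
  shows "cdf_r1 lam Rc r0 r = 1 - exp (- lam * area Rc r0 r)"
proof -
  consider "r \<le> Rc - r0" | "Rc - r0 < r" "r < Rc + r0" | "\<not> r \<le> Rc - r0" "\<not> r < Rc + r0" by linarith
  then show ?thesis
  proof cases
    case 2
    then have "r0 > 0" by linarith
    note ub = u_bounds_open[OF this assms(2) 2]
    have "zeta2 Rc r0 r = W Rc r0 r" by (rule zeta2_eq_W) (use ub in auto)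
    then show ?thesis using 2 unfolding cdf_r1_def area_def by simp
  qed (auto simp: cdf_r1_def area_def)
qed

lemma W_alg:
  fixes Rc r0 r s1 s2 t B :: real
  assumes "r > 0" "r0 > 0" "Rc > 0" "Rc * s1 = r * s2" "B = (r0\<^sup>2 + r\<^sup>2 - Rc\<^sup>2) / (2 * r0 * r)"
  shows "pi * (2 * r) - Rc\<^sup>2 * ((-2 * s1) * (- (r / (Rc * r0))))
         - (2 * r * (t - B * s2) + r\<^sup>2 * ((-2 * s2) * ((r\<^sup>2 - r0\<^sup>2 + Rc\<^sup>2) / (2 * r0 * r\<^sup>2))))
       = 2 * pi * r - 2 * r * t"
proof -
  have s1: "s1 = r * s2 / Rc" using assms(3,4) by (simp add: field_simps)
  show ?thesis unfolding s1 assms(5) using assms(1-3)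
    by (simp add: field_simps power2_eq_square)
qed

lemma uA_deriv: "Rc \<noteq> 0 \<Longrightarrow> r0 \<noteq> 0 \<Longrightarrow> ((\<lambda>r. uA Rc r0 r) has_real_derivative (- (r / (Rc * r0)))) (at r)"
  unfolding uA_def by (auto intro!: derivative_eq_intros simp: field_simps)

lemma uB_deriv: "r \<noteq> 0 \<Longrightarrow> r0 \<noteq> 0 \<Longrightarrow>
    ((\<lambda>r. uB Rc r0 r) has_real_derivative ((r\<^sup>2 - r0\<^sup>2 + Rc\<^sup>2) / (2 * r0 * r\<^sup>2))) (at r)"
  unfolding uB_def by (auto intro!: derivative_eq_intros simp: field_simps power2_eq_square)

lemma W_deriv:
  assumes "0 < r0" "r0 \<le> Rc" "Rc - r0 < r" "r < Rc + r0"
  shows "((\<lambda>r. W Rc r0 r) has_real_derivative zeta1 Rc r0 r) (at r)"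
proof -
  note ub = u_bounds_open[OF assms]
  have r: "r > 0" by (rule ub(5))
  have Rc: "Rc > 0" using assms by linarith
  define s1 where "s1 = sqrt (1 - (uA Rc r0 r)\<^sup>2)"
  define s2 where "s2 = sqrt (1 - (uB Rc r0 r)\<^sup>2)"
  have cA: "((\<lambda>r. phi (uA Rc r0 r)) has_real_derivative (-2 * s1) * (- (r / (Rc * r0)))) (at r)"
    unfolding s1_def
    by (rule DERIV_chain2[where f=phi and g="\<lambda>r. uA Rc r0 r", OF phi_deriv uA_deriv]) (use ub Rc assms(1) in auto)
  have cB: "((\<lambda>r. phi (uB Rc r0 r)) has_real_derivative (-2 * s2) * ((r\<^sup>2 - r0\<^sup>2 + Rc\<^sup>2) / (2 * r0 * r\<^sup>2))) (at r)"
    unfolding s2_def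
    by (rule DERIV_chain2[where f=phi and g="\<lambda>r. uB Rc r0 r", OF phi_deriv uB_deriv]) (use ub r assms(1) in auto)
  have d1: "((\<lambda>r. pi * r\<^sup>2) has_real_derivative pi * (2 * r)) (at r)"
    by (auto intro!: derivative_eq_intros)
  have d2: "((\<lambda>r. Rc\<^sup>2 * phi (uA Rc r0 r)) has_real_derivative Rc\<^sup>2 * ((-2 * s1) * (- (r / (Rc * r0))))) (at r)"
    by (rule DERIV_cmult[OF cA])
  have d3: "((\<lambda>r. r\<^sup>2 * phi (uB Rc r0 r)) has_real_derivative
      2 * r * phi (uB Rc r0 r) + r\<^sup>2 * ((-2 * s2) * ((r\<^sup>2 - r0\<^sup>2 + Rc\<^sup>2) / (2 * r0 * r\<^sup>2)))) (at r)"
    using DERIV_mult[OF DERIV_pow[of 2 r] cB] by (simp add: algebra_simps)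
  have D: "((\<lambda>r. W Rc r0 r) has_real_derivative
      pi * (2 * r) - Rc\<^sup>2 * ((-2 * s1) * (- (r / (Rc * r0))))
      - (2 * r * phi (uB Rc r0 r) + r\<^sup>2 * ((-2 * s2) * ((r\<^sup>2 - r0\<^sup>2 + Rc\<^sup>2) / (2 * r0 * r\<^sup>2))))) (at r)"
    unfolding W_def[abs_def] by (intro DERIV_diff d1 d2 d3)
  have key: "Rc * s1 = r * s2"
  proof -
    have "Rc\<^sup>2 * (1 - (uA Rc r0 r)\<^sup>2) = r\<^sup>2 * (1 - (uB Rc r0 r)\<^sup>2)"
      unfolding uA_def uB_def using r Rc assms(1)
      by (simp add: field_simps power2_eq_square)
    then have "sqrt (Rc\<^sup>2 * (1 - (uA Rc r0 r)\<^sup>2)) = sqrt (r\<^sup>2 * (1 - (uB Rc r0 r)\<^sup>2))" by simp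
    then show ?thesis unfolding s1_def s2_def using r Rc by (simp add: real_sqrt_mult)
  qed
  have E: "pi * (2 * r) - Rc\<^sup>2 * ((-2 * s1) * (- (r / (Rc * r0))))
      - (2 * r * phi (uB Rc r0 r) + r\<^sup>2 * ((-2 * s2) * ((r\<^sup>2 - r0\<^sup>2 + Rc\<^sup>2) / (2 * r0 * r\<^sup>2))))
      = zeta1 Rc r0 r"
    unfolding zeta1_eq phi_def s2_def[symmetric]
    by (rule W_alg[OF r assms(1) Rc key]) (simp add: uB_def)
  show ?thesis by (rule DERIV_cong[OF D E])
qed

lemma phi_cont: "continuous_on S f \<Longrightarrow> (\<forall>x\<in>S. -1 \<le> f x \<and> f x \<le> 1) \<Longrightarrow> continuous_on S (\<lambda>x. phi (f x))"
  unfolding phi_def by (intro continuous_intros) auto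

lemma phi_1: "phi 1 = 0" and phi_m1: "phi (-1) = pi" unfolding phi_def by simp_all

lemma u_bounds_closed0:
  assumes "0 < r0" "r0 \<le> Rc" "Rc - r0 \<le> r" "r \<le> Rc + r0"
  shows "-1 \<le> uA Rc r0 r \<and> uA Rc r0 r \<le> 1" "-1 \<le> uB Rc r0 r \<and> uB Rc r0 r \<le> 1"
proof -
  have "-1 \<le> uA Rc r0 r \<and> uA Rc r0 r \<le> 1 \<and> -1 \<le> uB Rc r0 r \<and> uB Rc r0 r \<le> 1"
  proof (cases "r = 0")
    case True
    then have "r0 = Rc" using assms by linarith
    then show ?thesis using True assms by (simp add: uA_def uB_def power2_eq_square)
  next
    case False
    then have "0 < r" using assms by linarith
    from u_bounds_closed[OF assms this] show ?thesis by simp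
  qed
  then show "-1 \<le> uA Rc r0 r \<and> uA Rc r0 r \<le> 1" "-1 \<le> uB Rc r0 r \<and> uB Rc r0 r \<le> 1" by auto
qed

lemma W_cont:
  assumes "0 < r0" "r0 \<le> Rc"
  shows "continuous_on {Rc - r0 .. Rc + r0} (W Rc r0)"
proof -
  let ?I = "{Rc - r0 .. Rc + r0}"
  have cA: "continuous_on ?I (\<lambda>r. uA Rc r0 r)" unfolding uA_def using assms by (intro continuous_intros) auto
  have cB: "continuous_on ?I (\<lambda>r. uB Rc r0 r)"
  proof (cases "r0 < Rc")
    case True
    then show ?thesis unfolding uB_def using assms by (intro continuous_intros) auto
  next
    case False
    then have e: "r0 = Rc" using assms by simp
    have "\<And>r. uB Rc r0 r = r / (2 * Rc)" unfolding uB_def e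
      by (case_tac "r = 0") (simp_all add: power2_eq_square field_simps)
    have "continuous_on ?I (\<lambda>r. r / (2 * Rc))" using assms by (intro continuous_intros) auto
    then show ?thesis using \<open>\<And>r. uB Rc r0 r = r / (2 * Rc)\<close> by simp
  qed
  have pA: "continuous_on ?I (\<lambda>r. phi (uA Rc r0 r))"
    by (rule phi_cont[OF cA]) (use u_bounds_closed0[OF assms] in auto)
  have pB: "continuous_on ?I (\<lambda>r. phi (uB Rc r0 r))"
    by (rule phi_cont[OF cB]) (use u_bounds_closed0[OF assms] in auto)
  show ?thesis unfolding W_def[abs_def] by (intro continuous_intros pA pB)
qed

lemma W_a:
  assumes "0 < r0" "r0 \<le> Rc"
  shows "W Rc r0 (Rc - r0) = 0"
proof -
  have a: "uA Rc r0 (Rc - r0) = 1" unfolding uA_def using assms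
    by (simp add: field_simps power2_eq_square)
  show ?thesis
  proof (cases "r0 = Rc")
    case True then show ?thesis unfolding W_def a phi_1 by simp
  next
    case False
    then have "Rc - r0 > 0" using assms by simp
    then have b: "uB Rc r0 (Rc - r0) = -1" unfolding uB_def using assms
      by (simp add: field_simps power2_eq_square)
    show ?thesis unfolding W_def a b phi_1 phi_m1 by simp
  qed
qed

lemma W_b:
  assumes "0 < r0" "r0 \<le> Rc"
  shows "W Rc r0 (Rc + r0) = pi * (Rc + r0)\<^sup>2 - pi * Rc\<^sup>2"
proof -
  have a: "uA Rc r0 (Rc + r0) = -1" unfolding uA_def using assms
    by (simp add: field_simps power2_eq_square)
  have p: "Rc * (r0 * 2) + r0 * (r0 * 2) > 0" using assms by (simp add: add_pos_pos)
  have b: "uB Rc r0 (Rc + r0) = 1" unfolding uB_def using assms p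
    by (simp add: field_simps power2_eq_square)
  show ?thesis unfolding W_def a b phi_1 phi_m1 by simp
qed

lemma F_cont:
  assumes "0 \<le> r0" "r0 \<le> Rc" "0 < Rc"
  shows "continuous_on UNIV (cdf_r1 lam Rc r0)"
proof -
  let ?F = "cdf_r1 lam Rc r0"
  let ?a = "Rc - r0" and ?b = "Rc + r0"
  have c1: "continuous_on {..?a} ?F"
  proof -
    have "continuous_on {..?a} (\<lambda>_. 0::real)" by simp
    then show ?thesis by (rule continuous_on_eq) (auto simp: cdf_r1_def)
  qed
  have c3: "continuous_on {?b..} ?F"
  proof -
    have "continuous_on {?b..} (\<lambda>r. 1 - exp (- lam * (pi * r\<^sup>2 - pi * Rc\<^sup>2)))"
      by (intro continuous_intros)
    moreover have "\<And>r. r \<in> {?b..} \<Longrightarrow> ?F r = 1 - exp (- lam * (pi * r\<^sup>2 - pi * Rc\<^sup>2))"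
    proof -
      fix r assume r: "r \<in> {?b..}"
      show "?F r = 1 - exp (- lam * (pi * r\<^sup>2 - pi * Rc\<^sup>2))"
      proof (cases "r \<le> ?a")
        case True
        then have "r = Rc" using r assms by auto
        then show ?thesis using True by (simp add: cdf_r1_def)
      next
        case False then show ?thesis using r by (simp add: cdf_r1_def)
      qed
    qed
    ultimately show ?thesis by (metis (no_types, lifting) continuous_on_eq)
  qed
  have c2: "continuous_on {?a..?b} ?F"
  proof (cases "r0 = 0")
    case True
    then show ?thesis by simp
  next
    case False
    then have r0: "0 < r0" using assms by simp
    have "continuous_on {?a..?b} (\<lambda>r. 1 - exp (- lam * W Rc r0 r))"
      by (intro continuous_intros continuous_on_compose2[OF W_cont[OF r0 assms(2)]]) auto
    moreover have "\<And>r. r \<in> {?a..?b} \<Longrightarrow> ?F r = 1 - exp (- lam * W Rc r0 r)"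
    proof -
      fix r assume r: "r \<in> {?a..?b}"
      consider "r = ?a" | "?a < r" "r < ?b" | "r = ?b" using r by fastforce
      then show "?F r = 1 - exp (- lam * W Rc r0 r)"
      proof cases
        case 1 then show ?thesis using W_a[OF r0 assms(2)] by (simp add: cdf_r1_def)
      next
        case 2
        note ub = u_bounds_open[OF r0 assms(2) 2]
        have "zeta2 Rc r0 r = W Rc r0 r" by (rule zeta2_eq_W) (use ub in auto)
        then show ?thesis using 2 by (simp add: cdf_r1_def)
      next
        case 3 then show ?thesis using W_b[OF r0 assms(2)] r0 by (simp add: cdf_r1_def)
      qed
    qed
    ultimately show ?thesis by (metis (no_types, lifting) continuous_on_eq)
  qed
  have "continuous_on ({..?a} \<union> ({?a..?b} \<union> {?b..})) ?F"
    by (intro continuous_on_closed_Un c1 c2 c3) auto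
  moreover have "{..?a} \<union> ({?a..?b} \<union> {?b..}) = UNIV" using assms by auto
  ultimately show ?thesis by simp
qed

lemma pdf_zero: "r \<le> Rc - r0 \<Longrightarrow> pdf_r1 lam Rc r0 r = 0"
  by (simp add: pdf_r1_def)

lemma pdf_nonneg:
  assumes "0 \<le> lam" "0 \<le> r0" "r0 \<le> Rc" "0 < Rc"
  shows "0 \<le> pdf_r1 lam Rc r0 r"
proof -
  consider "r \<le> Rc - r0" | "Rc - r0 < r" "r < Rc + r0" | "\<not> r \<le> Rc - r0" "\<not> r < Rc + r0" by linarith
  then show ?thesis
  proof cases
    case 1 then show ?thesis by (simp add: pdf_r1_def)
  next
    case 2
    then have r0: "0 < r0" by linarith
    note ub = u_bounds_open[OF r0 assms(3) 2]
    have "arccos (uB Rc r0 r) \<le> pi" using ub by (intro arccos_ubound) auto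
    then have "0 \<le> zeta1 Rc r0 r" unfolding zeta1_eq using ub(5)
      by (simp add: mult_left_mono algebra_simps)
    then show ?thesis using 2 assms by (simp add: pdf_r1_def)
  next
    case 3 then show ?thesis using assms by (simp add: pdf_r1_def)
  qed
qed

lemma F_deriv:
  assumes "0 \<le> r0" "r0 \<le> Rc" "0 < Rc" "y \<noteq> Rc - r0" "y \<noteq> Rc + r0"
  shows "(cdf_r1 lam Rc r0 has_real_derivative pdf_r1 lam Rc r0 y) (at y)"
proof -
  consider "y < Rc - r0" | "Rc - r0 < y" "y < Rc + r0" | "Rc + r0 < y" using assms by linarith
  then show ?thesis
  proof cases
    case 1
    have "((\<lambda>_. 0::real) has_real_derivative pdf_r1 lam Rc r0 y) (at y)" using 1 by (simp add: pdf_r1_def)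
    then show ?thesis
      by (rule has_field_derivative_transform_within_open[where S="{..<Rc - r0}"])
         (use 1 in \<open>auto simp: cdf_r1_def pdf_r1_def\<close>)
  next
    case 2
    then have r0: "0 < r0" by linarith
    note ub = u_bounds_open[OF r0 assms(2) 2]
    have z: "zeta2 Rc r0 y = W Rc r0 y" by (rule zeta2_eq_W) (use ub in auto)
    have "((\<lambda>r. 1 - exp (- lam * W Rc r0 r)) has_real_derivative
        - (exp (- lam * W Rc r0 y) * (- lam * zeta1 Rc r0 y))) (at y)"
      by (auto intro!: derivative_eq_intros W_deriv[OF r0 assms(2) 2])
    then have "((\<lambda>r. 1 - exp (- lam * W Rc r0 r)) has_real_derivative pdf_r1 lam Rc r0 y) (at y)"
      using 2 z by (simp add: pdf_r1_def mult_ac)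
    then show ?thesis
    proof (rule has_field_derivative_transform_within_open[where S="{Rc - r0<..<Rc + r0}"])
      fix r assume r: "r \<in> {Rc - r0<..<Rc + r0}"
      then have rr: "Rc - r0 < r" "r < Rc + r0" by auto
      note ub' = u_bounds_open[OF r0 assms(2) rr]
      have "zeta2 Rc r0 r = W Rc r0 r" by (rule zeta2_eq_W) (use ub' in auto)
      then show "1 - exp (- lam * W Rc r0 r) = cdf_r1 lam Rc r0 r" using rr by (simp add: cdf_r1_def)
    qed (use 2 in auto)
  next
    case 3
    have "((\<lambda>r. 1 - exp (- lam * (pi * r\<^sup>2 - pi * Rc\<^sup>2))) has_real_derivative
        - (exp (- lam * (pi * y\<^sup>2 - pi * Rc\<^sup>2)) * (- lam * (pi * (2 * y) - 0)))) (at y)"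
      by (auto intro!: derivative_eq_intros)
    then have "((\<lambda>r. 1 - exp (- lam * (pi * r\<^sup>2 - pi * Rc\<^sup>2))) has_real_derivative pdf_r1 lam Rc r0 y) (at y)"
      using 3 assms by (simp add: pdf_r1_def algebra_simps)
    then show ?thesis
      by (rule has_field_derivative_transform_within_open[where S="{Rc + r0<..}"])
         (use 3 assms in \<open>auto simp: cdf_r1_def\<close>)
  qed
qed

lemma pdf_integral:
  assumes "0 \<le> lam" "0 \<le> r0" "r0 \<le> Rc" "0 < Rc"
  shows "(\<integral>\<^sup>+y. ennreal (pdf_r1 lam Rc r0 y) * indicator {..x} y \<partial>lborel) = ennreal (cdf_r1 lam Rc r0 x)"
proof (cases "x \<le> Rc - r0")
  case True
  have "(\<integral>\<^sup>+y. ennreal (pdf_r1 lam Rc r0 y) * indicator {..x} y \<partial>lborel) = (\<integral>\<^sup>+(y::real). 0 \<partial>lborel)"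
    by (rule nn_integral_cong) (use True in \<open>auto simp: indicator_def pdf_zero\<close>)
  then show ?thesis using True by (simp add: cdf_r1_def)
next
  case False
  let ?a = "Rc - r0"
  have I: "(pdf_r1 lam Rc r0 has_integral (cdf_r1 lam Rc r0 x - cdf_r1 lam Rc r0 ?a)) {?a..x}"
  proof (rule fundamental_theorem_of_calculus_interior_strong[where S="{Rc - r0, Rc + r0}"])
    show "continuous_on {?a..x} (cdf_r1 lam Rc r0)"
      using F_cont[OF assms(2-4)] by (rule continuous_on_subset) simp
    fix y assume "y \<in> {?a<..<x} - {Rc - r0, Rc + r0}"
    then show "(cdf_r1 lam Rc r0 has_vector_derivative pdf_r1 lam Rc r0 y) (at y)"
      using F_deriv[OF assms(2-4)] by (simp add: has_real_derivative_iff_has_vector_derivative[symmetric])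
  qed (use False in auto)
  have Fa: "cdf_r1 lam Rc r0 ?a = 0" by (simp add: cdf_r1_def)
  have "(\<integral>\<^sup>+y. ennreal (pdf_r1 lam Rc r0 y) * indicator {..x} y \<partial>lborel)
      = (\<integral>\<^sup>+y. ennreal (pdf_r1 lam Rc r0 y) * indicator {?a..x} y \<partial>lborel)"
    by (rule nn_integral_cong) (auto simp: indicator_def pdf_zero)
  also have "\<dots> = ennreal (cdf_r1 lam Rc r0 x)"
    using nn_integral_has_integral_lebesgue'[OF _ I] pdf_nonneg[OF assms] Fa by simp
  finally show ?thesis .
qed

lemma arccos_out: "\<bar>y\<bar> > 1 \<Longrightarrow> arccos y = arccos 2"
proof -
  assume y: "\<bar>y\<bar> > 1"
  have "(\<lambda>x. 0 \<le> x \<and> x \<le> pi \<and> cos x = y) = (\<lambda>x. 0 \<le> x \<and> x \<le> pi \<and> cos x = 2)"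
  proof (intro ext iffI)
    fix x assume "0 \<le> x \<and> x \<le> pi \<and> cos x = y"
    then show "0 \<le> x \<and> x \<le> pi \<and> cos x = 2" using y abs_cos_le_one[of x] by simp
  next
    fix x assume "0 \<le> x \<and> x \<le> pi \<and> cos x = 2"
    then show "0 \<le> x \<and> x \<le> pi \<and> cos x = y" using abs_cos_le_one[of x] by simp
  qed
  then show ?thesis unfolding arccos_def by simp
qed

lemma borel_measurable_arccos [measurable]: "arccos \<in> borel_measurable borel"
proof -
  have "(\<lambda>y. if y \<in> {-1..1} then arccos y else arccos 2) \<in> borel_measurable borel"
    by (rule borel_measurable_continuous_on_if) (auto intro: continuous_on_arccos')
  moreover have "(\<lambda>y. if y \<in> {-1..1} then arccos y else arccos 2) = arccos"
  proof
    fix y :: real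
    show "(if y \<in> {-1..1} then arccos y else arccos 2) = arccos y"
    proof (cases "y \<in> {-1..1}")
      case False
      then have "\<bar>y\<bar> > 1" by auto
      from arccos_out[OF this] False show ?thesis by simp
    qed simp
  qed
  ultimately show ?thesis by simp
qed

lemma pdf_measurable: "pdf_r1 lam Rc r0 \<in> borel_measurable borel"
  unfolding pdf_r1_def[abs_def] zeta1_def zeta2_def theta1_def theta2_def arcsec_def
  by measurable

lemma lim_exp_area:
  assumes "lam > 0"
  shows "(\<lambda>n::nat. exp (- lam * (pi * (real n)\<^sup>2 - pi * Rc\<^sup>2))) \<longlonglongrightarrow> 0"
  using assms pi_gt_zero by real_asymp

theorem lemma1:
  fixes M :: "'s measure" and Phi :: "'s \<Rightarrow> (real \<times> real) set"
    and lam Rc r0 :: real and r1 :: "'s \<Rightarrow> real"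
  assumes "lam > 0" and "Rc > 0"
    and "poisson_point_process M Phi lam"
    and "0 \<le> r0" and "r0 \<le> Rc"
    and "r1 = (\<lambda>\<omega>. Inf ((\<lambda>y. dist y (r0, 0)) ` (Phi \<omega> - cball 0 Rc)))"
  shows "distributed M lborel r1 (\<lambda>r. ennreal (pdf_r1 lam Rc r0 r))
    \<and> (\<forall>r. measure M {\<omega>\<in>space M. r1 \<omega> \<le> r} = cdf_r1 lam Rc r0 r)"
proof -
  note lam = assms(1) and Rc = assms(2) and r0 = assms(4,5) and r1def = assms(6)
  have P: "prob_space M"
    and fin: "\<And>\<omega> A. \<omega> \<in> space M \<Longrightarrow> bounded A \<Longrightarrow> finite (Phi \<omega> \<inter> A)"
    and cnt: "\<And>A k. A \<in> sets lborel \<Longrightarrow> bounded A \<Longrightarrow>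
        measure M {\<omega>\<in>space M. card (Phi \<omega> \<inter> A) = k}
             = (lam * measure lborel A) ^ k / fact k * exp (- lam * measure lborel A)"
    using assms(3) unfolding poisson_point_process_def by blast+
  interpret P: prob_space M by (rule P)
  define x0 where "x0 = (r0, 0::real)"
  define S where "S r = cball x0 r - cball 0 Rc" for r
  have S_sets: "S r \<in> sets lborel" for r unfolding S_def by auto
  have S_bdd: "bounded (S r)" for r unfolding S_def by (rule bounded_subset[OF bounded_cball]) auto
  define E where "E r = {\<omega>\<in>space M. card (Phi \<omega> \<inter> S r) = 0}" for r
  have E_meas: "measure M (E r) = exp (- lam * area Rc r0 r)" for r
  proof -
    have "measure M (E r) = exp (- lam * measure lborel (S r))"
      unfolding E_def using cnt[of "S r" 0, OF S_sets S_bdd] by simp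
    also have "measure lborel (S r) = area Rc r0 r"
      unfolding S_def x0_def by (rule area_measure[OF r0 Rc])
    finally show ?thesis .
  qed
  have E_sets: "E r \<in> sets M" for r
  proof (rule ccontr)
    assume "E r \<notin> sets M"
    then have "measure M (E r) = 0" by (rule measure_notin_sets)
    then show False using E_meas[of r] by simp
  qed
  have E_iff: "\<omega> \<in> E r \<longleftrightarrow> \<omega> \<in> space M \<and> Phi \<omega> \<inter> S r = {}" for \<omega> r
    unfolding E_def using fin[OF _ S_bdd] by auto
  define E0 where "E0 = {\<omega>\<in>space M. Phi \<omega> - cball 0 Rc = {}}"
  have E0_eq: "E0 = (\<Inter>n. E (real n))"
  proof (intro set_eqI iffI)
    fix \<omega> assume "\<omega> \<in> E0"
    then show "\<omega> \<in> (\<Inter>n. E (real n))" by (auto simp: E0_def E_iff S_def)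
  next
    fix \<omega> assume w: "\<omega> \<in> (\<Inter>n. E (real n))"
    then have sp: "\<omega> \<in> space M" using E_iff by auto
    have "Phi \<omega> - cball 0 Rc = {}"
    proof (rule ccontr)
      assume "Phi \<omega> - cball 0 Rc \<noteq> {}"
      then obtain y where y: "y \<in> Phi \<omega>" "y \<notin> cball 0 Rc" by blast
      obtain n :: nat where "dist x0 y \<le> real n" using real_arch_simple by blast
      then have "y \<in> Phi \<omega> \<inter> S (real n)" unfolding S_def using y by auto
      moreover have "Phi \<omega> \<inter> S (real n) = {}" using w E_iff by auto
      ultimately show False by auto
    qed
    then show "\<omega> \<in> E0" unfolding E0_def using sp by auto
  qed
  have E0_sets: "E0 \<in> sets M" unfolding E0_eq by (rule sets.countable_INT) (auto intro: E_sets)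
  have E0_null: "E0 \<in> null_sets M"
  proof -
    define N where "N = nat \<lceil>Rc + r0\<rceil> + 1"
    have "measure M E0 \<le> 0"
    proof (rule LIMSEQ_le_const[OF lim_exp_area[OF lam, of Rc]], intro exI allI impI)
      fix n assume n: "N \<le> n"
      have "Rc + r0 \<le> real (nat \<lceil>Rc + r0\<rceil>)" by linarith
      then have nb: "Rc + r0 < real n" using n unfolding N_def by linarith
      have "measure M E0 \<le> measure M (E (real n))"
        by (rule P.finite_measure_mono) (auto simp: E0_eq E_sets)
      also have "\<dots> = exp (- lam * (pi * (real n)\<^sup>2 - pi * Rc\<^sup>2))"
        unfolding E_meas area_def using nb r0 by auto
      finally show "measure M E0 \<le> exp (- lam * (pi * (real n)\<^sup>2 - pi * Rc\<^sup>2))" .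
    qed
    then have "measure M E0 = 0" using measure_nonneg[of M E0] by linarith
    then show ?thesis using E0_sets by (simp add: P.emeasure_eq_measure null_sets_def)
  qed
  have key: "r1 \<omega> \<le> r \<longleftrightarrow> Phi \<omega> \<inter> S r \<noteq> {}" if w: "\<omega> \<in> space M - E0" for \<omega> r
  proof -
    define Q where "Q = Phi \<omega> - cball 0 Rc"
    define f where "f y = dist y x0" for y
    have Qne: "Q \<noteq> {}" using w unfolding E0_def Q_def by auto
    then obtain y0 where y0: "y0 \<in> Q" by auto
    define R where "R = f y0"
    define Q' where "Q' = Q \<inter> cball x0 R"
    have finQ': "finite Q'" unfolding Q'_def Q_def
      using fin[of \<omega> "cball x0 R"] w by (auto intro: finite_subset)
    have y0Q': "y0 \<in> Q'" unfolding Q'_def R_def f_def using y0 by (simp add: dist_commute)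
    then have "Min (f ` Q') \<in> f ` Q'" using finQ' by (intro Min_in) auto
    then obtain ym where ym: "ym \<in> Q'" "f ym = Min (f ` Q')" by auto
    have ymin: "f ym \<le> f z" if z: "z \<in> Q" for z
    proof (cases "f z \<le> R")
      case True
      then have "z \<in> Q'" unfolding Q'_def f_def using z by (simp add: dist_commute)
      then show ?thesis using ym finQ' by simp
    next
      case False
      have "f ym \<le> R" using ym(1) unfolding Q'_def f_def by (simp add: dist_commute)
      then show ?thesis using False by simp
    qed
    have ymQ: "ym \<in> Q" using ym(1) unfolding Q'_def by auto
    have r1w: "r1 \<omega> = f ym"
      unfolding r1def f_def[symmetric] x0_def[symmetric] Q_def[symmetric]
      by (rule cInf_eq_minimum) (use ymQ ymin in auto)
    show ?thesis
    proof
      assume "r1 \<omega> \<le> r"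
      then have "ym \<in> Phi \<omega> \<inter> S r" using ymQ r1w unfolding Q_def S_def f_def by (auto simp: dist_commute)
      then show "Phi \<omega> \<inter> S r \<noteq> {}" by auto
    next
      assume "Phi \<omega> \<inter> S r \<noteq> {}"
      then obtain z where z: "z \<in> Phi \<omega>" "z \<in> S r" by auto
      then have "z \<in> Q" "f z \<le> r" unfolding Q_def S_def f_def by (auto simp: dist_commute)
      then show "r1 \<omega> \<le> r" using ymin r1w by fastforce
    qed
  qed
  define c where "c = Inf ({} :: real set)"
  have r1E0: "r1 \<omega> = c" if "\<omega> \<in> E0" for \<omega>
  proof -
    have "Phi \<omega> - cball 0 Rc = {}" using that unfolding E0_def by blast
    then show ?thesis unfolding r1def c_def by (simp only: image_empty)
  qed
  have set_eq: "{\<omega>\<in>space M. r1 \<omega> \<le> r} = (space M - E r - E0) \<union> (if c \<le> r then E0 else {})" for r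
  proof (intro set_eqI iffI)
    fix \<omega> assume w: "\<omega> \<in> {\<omega>\<in>space M. r1 \<omega> \<le> r}"
    show "\<omega> \<in> (space M - E r - E0) \<union> (if c \<le> r then E0 else {})"
    proof (cases "\<omega> \<in> E0")
      case True then show ?thesis using w r1E0 by auto
    next
      case False
      then have "Phi \<omega> \<inter> S r \<noteq> {}" using key[of \<omega> r] w by auto
      then show ?thesis using w False E_iff by auto
    qed
  next
    fix \<omega> assume w: "\<omega> \<in> (space M - E r - E0) \<union> (if c \<le> r then E0 else {})"
    show "\<omega> \<in> {\<omega>\<in>space M. r1 \<omega> \<le> r}"
    proof (cases "\<omega> \<in> E0")
      case True
      then have "c \<le> r" using w by (auto split: if_splits)
      then show ?thesis using True r1E0 E0_sets sets.sets_into_space by fastforce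
    next
      case False
      then have "\<omega> \<in> space M - E r" using w by (auto split: if_splits)
      then have "Phi \<omega> \<inter> S r \<noteq> {}" "\<omega> \<in> space M" using E_iff by auto
      then show ?thesis using key[of \<omega> r] False by auto
    qed
  qed
  have B_null: "(if c \<le> r then E0 else {}) \<in> null_sets M" for r using E0_null by auto
  have le_sets: "{\<omega>\<in>space M. r1 \<omega> \<le> r} \<in> sets M" for r
    unfolding set_eq using E_sets E0_sets B_null by auto
  have r1_meas: "r1 \<in> borel_measurable M" unfolding borel_measurable_iff_le using le_sets by blast
  have cdf_eq: "measure M {\<omega>\<in>space M. r1 \<omega> \<le> r} = cdf_r1 lam Rc r0 r" for r
  proof -
    have "measure M {\<omega>\<in>space M. r1 \<omega> \<le> r} = measure M (space M - E r - E0)"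
      unfolding set_eq by (rule measure_Un_null_set[OF _ B_null]) (use E_sets E0_sets in auto)
    also have "\<dots> = measure M (space M - E r)"
      by (rule measure_Diff_null_set[OF _ E0_null]) (use E_sets in auto)
    also have "\<dots> = 1 - exp (- lam * area Rc r0 r)" using P.prob_compl[OF E_sets] E_meas by simp
    also have "\<dots> = cdf_r1 lam Rc r0 r" by (rule cdf_area[OF r0 Rc, symmetric])
    finally show ?thesis .
  qed
  have pdf_meas: "(\<lambda>r. ennreal (pdf_r1 lam Rc r0 r)) \<in> borel_measurable lborel"
    using pdf_measurable[of lam Rc r0] by simp
  have "distr M lborel r1 = density lborel (\<lambda>r. ennreal (pdf_r1 lam Rc r0 r))"
  proof (rule measure_eqI_generator_eq[where \<Omega>=UNIV and E="range atMost" and A="\<lambda>i. {..real i}"])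
    show "Int_stable (range atMost :: real set set)"
      unfolding Int_stable_def by (auto simp: Int_atMost)
    show "range atMost \<subseteq> Pow (UNIV :: real set)" by simp
    have sb: "sets (borel :: real measure) = sigma_sets UNIV (range atMost)"
      by (subst borel_eq_atMost) simp
    show "sets (distr M lborel r1) = sigma_sets UNIV (range atMost)" using sb by simp
    show "sets (density lborel (\<lambda>r. ennreal (pdf_r1 lam Rc r0 r))) = sigma_sets UNIV (range atMost)"
      using sb by simp
    show "range (\<lambda>i. {..real i}) \<subseteq> range atMost" by auto
    show "(\<Union>i. {..real i}) = (UNIV :: real set)"
      by (auto intro: real_arch_simple)
    fix X :: "real set"
    have dx: "emeasure (distr M lborel r1) {..x} = ennreal (cdf_r1 lam Rc r0 x)" for x
    proof -
      have "emeasure (distr M lborel r1) {..x} = emeasure M (r1 -` {..x} \<inter> space M)"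
        by (rule emeasure_distr) (use r1_meas in auto)
      also have "r1 -` {..x} \<inter> space M = {\<omega>\<in>space M. r1 \<omega> \<le> x}" by auto
      also have "emeasure M \<dots> = ennreal (cdf_r1 lam Rc r0 x)"
        using cdf_eq[of x] le_sets[of x] by (simp add: P.emeasure_eq_measure)
      finally show ?thesis .
    qed
    show "emeasure (distr M lborel r1) ({..real i}) \<noteq> \<infinity>" for i
      using dx[of "real i"] by simp
    assume "X \<in> range atMost"
    then obtain x where X: "X = {..x}" by auto
    have "emeasure (density lborel (\<lambda>r. ennreal (pdf_r1 lam Rc r0 r))) {..x}
        = (\<integral>\<^sup>+y. ennreal (pdf_r1 lam Rc r0 y) * indicator {..x} y \<partial>lborel)"
      by (rule emeasure_density[OF pdf_meas]) simp
    also have "\<dots> = ennreal (cdf_r1 lam Rc r0 x)"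
      by (rule pdf_integral) (use lam r0 Rc in auto)
    finally show "emeasure (distr M lborel r1) X = emeasure (density lborel (\<lambda>r. ennreal (pdf_r1 lam Rc r0 r))) X"
      unfolding X dx by simp
  qed
  then have "distributed M lborel r1 (\<lambda>r. ennreal (pdf_r1 lam Rc r0 r))"
    unfolding distributed_def using pdf_meas r1_meas by simp
  then show ?thesis using cdf_eq by blast
qed

end
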